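(* Let $\mathbf{X}\in\mathbb{R}^{m\times n}$, fix $p$ with $0<p<1$, and for each positive integer $d$ define $\theta(d)=\dfrac{p}{d-(d-1)p}$. Consider the problem $$\min_{d,\mathbf{U},\mathbf{V}}\ \mathbb{E}_{\mathbf{r}}\left\|\mathbf{X}-\tfrac{1}{\theta(d)}\mathbf{U}\,\mathrm{diag}(\mathbf{r})\,\mathbf{V}^\top\right\|_F^2,$$ over positive integers $d$, $\mathbf{U}\in\mathbb{R}^{m\times d}$, $\mathbf{V}\in\mathbb{R}^{n\times d}$, where $\mathbf{r}\in\mathbb{R}^d$ has i.i.d. $\mathrm{Bernoulli}(\theta(d))$ entries. Let $\mathbf{U}^{\rm opt}\in\mathbb{R}^{m\times d^{\rm opt}}$, $\mathbf{V}^{\rm opt}\in\mathbb{R}^{n\times d^{\rm opt}}$ attain the global optimum of this problem. Then $\mathbf{A}^{\rm opt}=\mathbf{U}^{\rm opt}(\mathbf{V}^{\rm opt})^\top$ is the global minimizer over $\mathbf{A}\in\mathbb{R}^{m\times n}$ of $$\|\mathbf{X}-\mathbf{A}\|_F^2+\frac{1-p}{p}\|\mathbf{A}\|_\star^2.$$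
   Context: $\|\cdot\|_F$ is the Frobenius norm, $\|\cdot\|_\star$ the nuclear norm (sum of singular values), $\mathrm{diag}(\mathbf{r})$ the diagonal matrix with diagonal $\mathbf{r}$, and $\mathbb{E}_{\mathbf{r}}$ the expectation with respect to $\mathbf{r}$. *)

theory Defs
  imports "HOL-Probability.Product_PMF" "Jordan_Normal_Form.Char_Poly"
begin

definition theta :: "real \<Rightarrow> nat \<Rightarrow> real" where
  "theta p d = p / (real d - (real d - 1) * p)"

definition frob_sq :: "real mat \<Rightarrow> real" where
  "frob_sq A = (\<Sum>i<dim_row A. \<Sum>j<dim_col A. (index_mat A (i, j))\<^sup>2)"

text \<open>Singular values of A are the square roots of the eigenvalues of A^T A, counted
  with algebraic multiplicity; the nuclear norm is their sum.\<close>
definition nuclear_norm :: "real mat \<Rightarrow> real" where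
  "nuclear_norm A =
     (let q = char_poly (transpose_mat A * A)
      in \<Sum>x\<in>{x. poly q x = 0}. real (order x q) * sqrt x)"

definition diag_bool :: "nat \<Rightarrow> (nat \<Rightarrow> bool) \<Rightarrow> real mat" where
  "diag_bool d r = mat d d (\<lambda>(i, j). if i = j then of_bool (r i) else 0)"

definition dropout_obj :: "real \<Rightarrow> real mat \<Rightarrow> nat \<Rightarrow> real mat \<Rightarrow> real mat \<Rightarrow> real" where
  "dropout_obj p X d U V =
     measure_pmf.expectation (Pi_pmf {..<d} False (\<lambda>_. bernoulli_pmf (theta p d)))
       (\<lambda>r. frob_sq (X - (1 / theta p d) \<cdot>\<^sub>m (U * diag_bool d r * transpose_mat V)))"

end

theory Submission
  imports Defs "Jordan_Normal_Form.Schur_Decomposition"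
begin


unbundle no vec_syntax
unbundle no inner_syntax

lemma mult_mat_vec_sum:
  assumes "A \<in> carrier_mat n k" "v \<in> carrier_vec k" "i < n"
  shows "(A *\<^sub>v v) $ i = (\<Sum>j<k. A $$ (i,j) * v $ j)"
  using assms by (auto simp: scalar_prod_def row_def atLeast0LessThan intro!: sum.cong)

lemma scalar_prod_sum:
  assumes "v \<in> carrier_vec n" "w \<in> carrier_vec n"
  shows "v \<bullet> w = (\<Sum>i<n. v $ i * w $ i)"
  using assms by (auto simp: scalar_prod_def atLeast0LessThan)

lemma mult_mat_sum:
  assumes "A \<in> carrier_mat m k" "B \<in> carrier_mat k n" "i < m" "j < n"
  shows "(A * B) $$ (i,j) = (\<Sum>l<k. A $$ (i,l) * B $$ (l,j))"
  using assms by (auto simp: scalar_prod_def atLeast0LessThan intro!: sum.cong)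

definition orth_mat :: "nat \<Rightarrow> real mat \<Rightarrow> bool" where
  "orth_mat n Q \<longleftrightarrow> Q \<in> carrier_mat n n \<and>
     (\<forall>i<n. \<forall>j<n. (\<Sum>l<n. Q $$ (l,i) * Q $$ (l,j)) = (if i = j then 1 else 0))"

lemma orth_mat_TQ:
  assumes "orth_mat n Q" shows "transpose_mat Q * Q = 1\<^sub>m n"
  using assms unfolding orth_mat_def
  by (intro eq_matI) (auto simp: mult_mat_sum[of _ n n _ n] )

lemma orth_mat_QT:
  assumes "orth_mat n Q" shows "Q * transpose_mat Q = 1\<^sub>m n"
proof -
  have Q: "Q \<in> carrier_mat n n" using assms unfolding orth_mat_def by auto
  show ?thesis
    by (rule mat_mult_left_right_inverse[OF _ Q orth_mat_TQ[OF assms]]) (use Q in auto)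
qed

lemma orth_mat_rows:
  assumes "orth_mat n Q" "i < n" "j < n"
  shows "(\<Sum>l<n. Q $$ (i,l) * Q $$ (j,l)) = (if i = j then 1 else 0)"
proof -
  have Q: "Q \<in> carrier_mat n n" using assms unfolding orth_mat_def by auto
  have "(Q * transpose_mat Q) $$ (i,j) = (\<Sum>l<n. Q $$ (i,l) * Q $$ (j,l))"
    using Q assms by (subst mult_mat_sum[of _ n n _ n]) auto
  thus ?thesis using orth_mat_QT[OF assms(1)] assms by auto
qed

lemma orth_dot:
  assumes Q: "orth_mat n Q" and a: "a \<in> carrier_vec n" and b: "b \<in> carrier_vec n"
  shows "(Q *\<^sub>v a) \<bullet> (Q *\<^sub>v b) = a \<bullet> b"
proof -
  have QC: "Q \<in> carrier_mat n n" using Q unfolding orth_mat_def by auto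
  have "(Q *\<^sub>v a) \<bullet> (Q *\<^sub>v b) = (\<Sum>i<n. (Q *\<^sub>v a) $ i * (Q *\<^sub>v b) $ i)"
    using QC a b by (intro scalar_prod_sum) auto
  also have "\<dots> = (\<Sum>i<n. (\<Sum>j<n. Q $$ (i,j) * a $ j) * (\<Sum>l<n. Q $$ (i,l) * b $ l))"
    by (rule sum.cong[OF refl]) (simp add: mult_mat_vec_sum[OF QC a] mult_mat_vec_sum[OF QC b] del: index_mult_mat_vec)
  also have "\<dots> = (\<Sum>i<n. \<Sum>j<n. \<Sum>l<n. a $ j * b $ l * (Q $$ (i,j) * Q $$ (i,l)))"
    by (simp add: sum_product mult_ac)
  also have "\<dots> = (\<Sum>j<n. \<Sum>l<n. a $ j * b $ l * (\<Sum>i<n. Q $$ (i,j) * Q $$ (i,l)))"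
    apply (rule trans[OF sum.swap]) apply (rule sum.cong[OF refl]) apply (rule trans[OF sum.swap])
    by (simp only: sum_distrib_left)
  also have "\<dots> = (\<Sum>j<n. \<Sum>l<n. a $ j * b $ l * (if j = l then 1 else 0))"
    using Q unfolding orth_mat_def by (intro sum.cong refl) auto
  also have "\<dots> = (\<Sum>j<n. a $ j * b $ j)"
    by (simp add: if_distrib cong: if_cong)
  also have "\<dots> = a \<bullet> b" using a b by (simp add: scalar_prod_sum[of _ n])
  finally show ?thesis .
qed

lemma conjugate_real_vec[simp]: "conjugate (w :: real vec) = w"
  by (rule eq_vecI) auto

lemma self_dot_nonneg: "(w :: real vec) \<bullet> w \<ge> 0"
  unfolding scalar_prod_def by (intro sum_nonneg) auto

lemma orth_basis_with:
  assumes v: "v \<in> carrier_vec n" and v1: "v \<bullet> v = 1" and n: "0 < n"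
  shows "\<exists>Q. orth_mat n Q \<and> (\<forall>i<n. Q $$ (i,0) = v $ i)"
proof -
  interpret cof_vec_space n "TYPE(real)" .
  have v0: "v \<noteq> 0\<^sub>v n" using v1 v by auto
  define b where "b = basis_completion v"
  from basis_completion[OF v v0, folded b_def]
  have dist_b: "distinct b" 
    and indep: "\<not> lin_dep (set b)" and b: "set b \<subseteq> carrier_vec n" and hdb: "hd b = v" 
    and len_b: "length b = n" by auto
  from hdb len_b n obtain vs where bv: "b = v # vs" by (cases b, auto)
  define ws where "ws = gram_schmidt n b"
  from gram_schmidt_result[OF b dist_b indep refl, folded ws_def]
  have ws: "set ws \<subseteq> carrier_vec n" "corthogonal ws" "length ws = n" 
    by (auto simp: len_b)
  from gram_schmidt_hd[OF v, of vs, folded bv] have hdws: "hd ws = v" unfolding ws_def .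
  have ws0: "ws ! 0 = v" using hdws ws(3) n by (cases ws) auto
  have wsC: "ws ! i \<in> carrier_vec n" if "i < n" for i using ws that by auto
  have wsorth: "ws ! i \<bullet> ws ! j = 0 \<longleftrightarrow> i \<noteq> j" if "i < n" "j < n" for i j
    using corthogonalD[OF ws(2), of i j] that ws(3) by (simp add: scalar_prod_def)
  define c where "c = (\<lambda>i. 1 / sqrt (ws ! i \<bullet> ws ! i))"
  define qs where "qs = map (\<lambda>i. c i \<cdot>\<^sub>v ws ! i) [0..<n]"
  define Q where "Q = mat_of_cols n qs"
  have qs_i: "qs ! i = c i \<cdot>\<^sub>v ws ! i" if "i < n" for i using that unfolding qs_def by auto
  have QC: "Q \<in> carrier_mat n n" unfolding Q_def qs_def by auto
  have Qij: "Q $$ (l,i) = c i * ws ! i $ l" if "l < n" "i < n" for l i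
  proof -
    have "length qs = n" unfolding qs_def by simp
    thus ?thesis using that wsC[of i] unfolding Q_def mat_of_cols_def by (simp add: qs_i)
  qed
  have pos: "ws ! i \<bullet> ws ! i > 0" if "i < n" for i
    using wsorth[OF that that] self_dot_nonneg[of "ws ! i"] by auto
  have "orth_mat n Q" unfolding orth_mat_def
  proof (intro conjI QC allI impI)
    fix i j assume i: "i < n" and j: "j < n"
    have "(\<Sum>l<n. Q $$ (l,i) * Q $$ (l,j)) = c i * c j * (ws ! i \<bullet> ws ! j)"
      using i j wsC[OF i] wsC[OF j]
      by (simp add: Qij scalar_prod_sum[of _ n] sum_distrib_left mult_ac)
    also have "\<dots> = (if i = j then 1 else 0)"
    proof (cases "i = j")
      case True
      have "c i * c i * (ws ! i \<bullet> ws ! i) = 1" using pos[OF i] unfolding c_def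
        by (simp add: field_simps)
      thus ?thesis using True by simp
    next
      case False thus ?thesis using wsorth[OF i j] by simp
    qed
    finally show "(\<Sum>l<n. Q $$ (l,i) * Q $$ (l,j)) = (if i = j then 1 else 0)" .
  qed
  moreover have "Q $$ (i,0) = v $ i" if "i < n" for i
    using Qij[OF that n] ws0 v1 unfolding c_def by simp
  ultimately show ?thesis by blast
qed

lemma real_eigenvalue_sym:
  fixes M :: "real mat"
  assumes M: "M \<in> carrier_mat n n" and sym: "transpose_mat M = M" and n: "0 < n"
  shows "\<exists>e. eigenvalue M e"
proof -
  let ?Mc = "map_mat complex_of_real M"
  have Mc: "?Mc \<in> carrier_mat n n" using M by auto
  obtain as where cp: "char_poly ?Mc = (\<Prod>a\<leftarrow>as. [:- a, 1:])" and len: "length as = n"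
    using char_poly_factorized[OF Mc] by blast
  define a where "a = as ! 0"
  have "a \<in> set as" using len n unfolding a_def by auto
  hence "poly (char_poly ?Mc) a = 0" unfolding cp
    by (induct as) (auto simp: poly_prod_list)
  hence "eigenvalue ?Mc a" using eigenvalue_root_char_poly[OF Mc] by simp
  then obtain v where ev: "eigenvector ?Mc v a" unfolding eigenvalue_def by auto
  hence v: "v \<in> carrier_vec n" and v0: "v \<noteq> 0\<^sub>v n" and Mv: "?Mc *\<^sub>v v = a \<cdot>\<^sub>v v"
    using Mc unfolding eigenvector_def by auto
  have Mij: "M $$ (i,j) = M $$ (j,i)" if "i < n" "j < n" for i j
    using arg_cong[OF sym, of "\<lambda>A. A $$ (i,j)"] that M by auto
  define s where "s = (\<Sum>i<n. \<Sum>j<n. cnj (v $ i) * complex_of_real (M $$ (i,j)) * v $ j)"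
  define t where "t = (\<Sum>i<n. cnj (v $ i) * v $ i)"
  have "s = (\<Sum>i<n. cnj (v $ i) * (?Mc *\<^sub>v v) $ i)"
    unfolding s_def
    by (rule sum.cong[OF refl], subst mult_mat_vec_sum[OF Mc v], insert M,
        auto simp: sum_distrib_left mult.assoc)
  also have "\<dots> = a * t" unfolding Mv t_def using v by (auto simp: sum_distrib_left intro!: sum.cong)
  finally have s1: "s = a * t" .
  have "cnj s = (\<Sum>i<n. \<Sum>j<n. v $ i * complex_of_real (M $$ (i,j)) * cnj (v $ j))"
    unfolding s_def by simp
  also have "\<dots> = (\<Sum>j<n. \<Sum>i<n. v $ i * complex_of_real (M $$ (i,j)) * cnj (v $ j))"
    by (rule sum.swap)
  also have "\<dots> = s" unfolding s_def
    by (intro sum.cong refl, subst Mij, auto simp: mult_ac)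
  finally have s2: "cnj s = s" .
  have tr: "t = complex_of_real (\<Sum>i<n. (cmod (v $ i))\<^sup>2)"
  proof -
    have "t = (\<Sum>i<n. complex_of_real ((cmod (v $ i))\<^sup>2))"
      unfolding t_def by (intro sum.cong refl) (metis complex_norm_square mult.commute)
    thus ?thesis by simp
  qed
  have "\<exists>i<n. v $ i \<noteq> 0" using v v0 by (metis eq_vecI carrier_vecD index_zero_vec(1) index_zero_vec(2))
  then obtain i where i: "i < n" "v $ i \<noteq> 0" by auto
  have "(\<Sum>i<n. (cmod (v $ i))\<^sup>2) > 0"
    by (rule sum_pos2[of _ i], insert i, auto)
  hence t0: "t \<noteq> 0" unfolding tr by (metis of_real_eq_0_iff order_less_irrefl)
  have "cnj a * cnj t = a * t" using s1 s2 by (metis complex_cnj_mult)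
  moreover have "cnj t = t" unfolding tr by simp
  ultimately have "cnj a = a" using t0 by simp
  hence ar: "a = complex_of_real (Re a)" by (metis Reals_cnj_iff of_real_Re)
  have cpM: "char_poly ?Mc = map_poly complex_of_real (char_poly M)"
    by (rule of_real_hom.char_poly_hom[OF M])
  have "complex_of_real (poly (char_poly M) (Re a)) = poly (char_poly ?Mc) a"
    unfolding cpM by (subst ar, simp only: of_real_hom.poly_map_poly)
  also have "\<dots> = 0" by fact
  finally have "poly (char_poly M) (Re a) = 0" by simp
  thus ?thesis using eigenvalue_root_char_poly[OF M] by blast
qed

lemma spectral:
  fixes M :: "real mat"
  assumes "M \<in> carrier_mat n n" "transpose_mat M = M"
  shows "\<exists>ws lam. length ws = n \<and> set ws \<subseteq> carrier_vec n \<and>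
    (\<forall>i<n. \<forall>j<n. ws ! i \<bullet> ws ! j = (if i = j then 1 else 0)) \<and>
    (\<forall>i<n. M *\<^sub>v ws ! i = lam i \<cdot>\<^sub>v ws ! i)"
  using assms
proof (induction n arbitrary: M)
  case 0
  show ?case by (intro exI[of _ "[]"]) auto
next
  case (Suc k M)
  define N where "N = Suc k"
  have M: "M \<in> carrier_mat N N" using Suc.prems N_def by simp
  note sym = Suc.prems(2)
  have Npos: "0 < N" unfolding N_def by simp
  have Mij: "M $$ (i,j) = M $$ (j,i)" if "i < N" "j < N" for i j
    using arg_cong[OF sym, of "\<lambda>A. A $$ (i,j)"] that M by auto
  obtain e where e: "eigenvalue M e" using real_eigenvalue_sym[OF M sym Npos] by auto
  define v0 where "v0 = find_eigenvector M e"
  have ev0: "eigenvector M v0 e" unfolding v0_def by (rule find_eigenvector[OF M e])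
  hence v0: "v0 \<in> carrier_vec N" and v00: "v0 \<noteq> 0\<^sub>v N" and Mv0: "M *\<^sub>v v0 = e \<cdot>\<^sub>v v0"
    using M unfolding eigenvector_def by auto
  have "v0 \<bullet> v0 \<noteq> 0"
  proof
    assume "v0 \<bullet> v0 = 0"
    hence "v0 \<bullet>c v0 = 0" by simp
    hence "v0 = 0\<^sub>v N" using conjugate_square_eq_0_vec[OF v0] by auto
    with v00 show False by auto
  qed
  hence pos0: "v0 \<bullet> v0 > 0" using self_dot_nonneg[of v0] by auto
  define v where "v = (1 / sqrt (v0 \<bullet> v0)) \<cdot>\<^sub>v v0"
  have v: "v \<in> carrier_vec N" unfolding v_def using v0 by auto
  have v1: "v \<bullet> v = 1" unfolding v_def using v0 pos0
    by (simp add: smult_scalar_prod_distrib scalar_prod_smult_distrib[of _ N])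
  have Mv: "M *\<^sub>v v = e \<cdot>\<^sub>v v" unfolding v_def using M v0
    by (simp add: mult_mat_vec[of _ N N] Mv0 smult_smult_assoc mult.commute)
  obtain Q where Q: "orth_mat N Q" and Q0: "\<forall>i<N. Q $$ (i,0) = v $ i"
    using orth_basis_with[OF v v1 Npos] by auto
  have QC: "Q \<in> carrier_mat N N" using Q unfolding orth_mat_def by auto
  define B where "B = transpose_mat Q * M * Q"
  have BC: "B \<in> carrier_mat N N" unfolding B_def using QC M by auto
  have QB: "Q * B = M * Q"
  proof -
    have "Q * B = (Q * transpose_mat Q) * M * Q" unfolding B_def using QC M
      by (simp add: assoc_mult_mat[of _ N N _ N _ N])
    also have "\<dots> = M * Q" using orth_mat_QT[OF Q] M QC by simp
    finally show ?thesis .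
  qed
  have Bij: "B $$ (i,j) = (\<Sum>a<N. \<Sum>b<N. Q $$ (a,i) * M $$ (a,b) * Q $$ (b,j))"
    if "i < N" "j < N" for i j
  proof -
    have "B $$ (i,j) = (\<Sum>b<N. (transpose_mat Q * M) $$ (i,b) * Q $$ (b,j))"
      unfolding B_def using that QC M by (subst mult_mat_sum[of _ N N]) auto
    also have "\<dots> = (\<Sum>b<N. (\<Sum>a<N. Q $$ (a,i) * M $$ (a,b)) * Q $$ (b,j))"
      using that QC M by (intro sum.cong refl, subst mult_mat_sum[of _ N N]) auto
    also have "\<dots> = (\<Sum>b<N. \<Sum>a<N. Q $$ (a,i) * M $$ (a,b) * Q $$ (b,j))"
      by (simp add: sum_distrib_right)
    also have "\<dots> = (\<Sum>a<N. \<Sum>b<N. Q $$ (a,i) * M $$ (a,b) * Q $$ (b,j))"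
      by (rule sum.swap)
    finally show ?thesis .
  qed
  have Bsym: "B $$ (i,j) = B $$ (j,i)" if "i < N" "j < N" for i j
  proof -
    have "B $$ (j,i) = (\<Sum>a<N. \<Sum>b<N. Q $$ (a,j) * M $$ (a,b) * Q $$ (b,i))" by (rule Bij[OF that(2,1)])
    also have "\<dots> = (\<Sum>b<N. \<Sum>a<N. Q $$ (a,j) * M $$ (a,b) * Q $$ (b,i))" by (rule sum.swap)
    also have "\<dots> = B $$ (i,j)" unfolding Bij[OF that] by (intro sum.cong refl) (auto simp: Mij mult_ac)
    finally show ?thesis by simp
  qed
  have Bi0: "B $$ (i,0) = (if i = 0 then e else 0)" if "i < N" for i
  proof -
    have "B $$ (i,0) = (\<Sum>a<N. Q $$ (a,i) * (\<Sum>b<N. M $$ (a,b) * Q $$ (b,0)))"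
      using Bij[OF that Npos] by (simp add: sum_distrib_left mult_ac)
    also have "\<dots> = (\<Sum>a<N. Q $$ (a,i) * (e * Q $$ (a,0)))"
    proof (intro sum.cong refl)
      fix a assume a: "a \<in> {..<N}"
      have "(\<Sum>b<N. M $$ (a,b) * Q $$ (b,0)) = (M *\<^sub>v v) $ a"
        using a M v Q0 by (subst mult_mat_vec_sum[of _ N N]) auto
      also have "\<dots> = e * Q $$ (a,0)" using Mv a v Q0 by auto
      finally show "Q $$ (a,i) * (\<Sum>b<N. M $$ (a,b) * Q $$ (b,0)) = Q $$ (a,i) * (e * Q $$ (a,0))"
        by simp
    qed
    also have "\<dots> = e * (\<Sum>a<N. Q $$ (a,i) * Q $$ (a,0))"
      by (simp add: sum_distrib_left mult_ac)
    also have "\<dots> = (if i = 0 then e else 0)" using Q that unfolding orth_mat_def by auto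
    finally show ?thesis .
  qed
  define M' where "M' = mat k k (\<lambda>(i,j). B $$ (Suc i, Suc j))"
  have sucN: "Suc i < N \<longleftrightarrow> i < k" for i unfolding N_def by simp
  have M'C: "M' \<in> carrier_mat k k" unfolding M'_def by auto
  have M'sym: "transpose_mat M' = M'" unfolding M'_def
    by (rule eq_matI) (auto simp: Bsym sucN)
  obtain ys mu where ys: "length ys = k" "set ys \<subseteq> carrier_vec k"
    "\<forall>i<k. \<forall>j<k. ys ! i \<bullet> ys ! j = (if i = j then 1 else 0)"
    "\<forall>i<k. M' *\<^sub>v ys ! i = mu i \<cdot>\<^sub>v ys ! i"
    using Suc.IH[OF M'C M'sym] by blast
  define yh where "yh = (\<lambda>i. vCons 0 (ys ! i))"
  have yhC: "yh i \<in> carrier_vec N" if "i < k" for i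
    using ys(1,2) that unfolding yh_def N_def by auto
  have e0C: "unit_vec N 0 \<in> carrier_vec N" by simp
  have vQ: "v = Q *\<^sub>v unit_vec N 0"
  proof (rule eq_vecI)
    fix i assume "i < dim_vec (Q *\<^sub>v unit_vec N 0)"
    hence i: "i < N" using QC by simp
    have "(Q *\<^sub>v unit_vec N 0) $ i = (\<Sum>j<N. Q $$ (i,j) * unit_vec N 0 $ j)"
      by (rule mult_mat_vec_sum[OF QC e0C i])
    also have "\<dots> = (\<Sum>j<N. if j = 0 then Q $$ (i,j) else 0)"
      by (intro sum.cong refl) (auto simp: unit_vec_def)
    also have "\<dots> = v $ i" using Q0 i by simp
    finally show "v $ i = (Q *\<^sub>v unit_vec N 0) $ i" by simp
  qed (use v QC in auto)
  have Byh: "B *\<^sub>v yh i = mu i \<cdot>\<^sub>v yh i" if i: "i < k" for i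
  proof (rule eq_vecI)
    fix a assume "a < dim_vec (mu i \<cdot>\<^sub>v yh i)"
    hence a: "a < N" using yhC[OF i] by simp
    have "(B *\<^sub>v yh i) $ a = (\<Sum>j<N. B $$ (a,j) * yh i $ j)"
      by (rule mult_mat_vec_sum[OF BC yhC[OF i] a])
    also have "\<dots> = (\<Sum>j<k. B $$ (a, Suc j) * ys ! i $ j)"
      unfolding N_def by (subst sum.lessThan_Suc_shift) (simp add: yh_def)
    also have "\<dots> = (mu i \<cdot>\<^sub>v yh i) $ a"
    proof (cases a)
      case 0
      have "(\<Sum>j<k. B $$ (a, Suc j) * ys ! i $ j) = 0"
      proof (intro sum.neutral ballI)
        fix j assume "j \<in> {..<k}"
        hence j: "Suc j < N" using sucN by simp
        have "B $$ (a, Suc j) = 0" using 0 Bsym[OF Npos j] Bi0[OF j] by simp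
        thus "B $$ (a, Suc j) * ys ! i $ j = 0" by simp
      qed
      thus ?thesis using 0 yhC[OF i] by (simp add: yh_def)
    next
      case (Suc a')
      have a': "a' < k" using a Suc sucN by simp
      have ysC: "ys ! i \<in> carrier_vec k" using ys(1,2) i by auto
      have "(\<Sum>j<k. B $$ (a, Suc j) * ys ! i $ j) = (M' *\<^sub>v ys ! i) $ a'"
        using Suc a' ysC by (subst mult_mat_vec_sum[OF M'C ysC a']) (simp add: M'_def)
      also have "\<dots> = mu i * ys ! i $ a'" using ys(4) i a' ysC by simp
      finally show ?thesis using Suc a yhC[OF i] ysC by (simp add: yh_def N_def)
    qed
    finally show "(B *\<^sub>v yh i) $ a = (mu i \<cdot>\<^sub>v yh i) $ a" .
  qed (use BC yhC[OF i] in auto)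
  define ws where "ws = v # map (\<lambda>i. Q *\<^sub>v yh i) [0..<k]"
  define lam where "lam = (\<lambda>i. if i = 0 then e else mu (i - 1))"
  have len: "length ws = N" unfolding ws_def N_def by simp
  have ws_i: "ws ! Suc i = Q *\<^sub>v yh i" if "i < k" for i
    using that unfolding ws_def by simp
  have wsC: "set ws \<subseteq> carrier_vec N" unfolding ws_def using v QC yhC by auto
  have dot_yh: "yh i \<bullet> yh j = ys ! i \<bullet> ys ! j" if "i < k" "j < k" for i j
  proof -
    have C: "ys ! i \<in> carrier_vec k" "ys ! j \<in> carrier_vec k" using that ys(1,2) by auto
    have "yh i \<bullet> yh j = (\<Sum>l<Suc k. yh i $ l * yh j $ l)"
      using yhC[OF that(1)] yhC[OF that(2)] unfolding N_def by (intro scalar_prod_sum) auto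
    also have "\<dots> = (\<Sum>l<k. ys ! i $ l * ys ! j $ l)"
      by (subst sum.lessThan_Suc_shift) (simp add: yh_def)
    also have "\<dots> = ys ! i \<bullet> ys ! j" using C by (simp add: scalar_prod_sum[of _ k])
    finally show ?thesis .
  qed
  have ev: "M *\<^sub>v ws ! i = lam i \<cdot>\<^sub>v ws ! i" if "i < N" for i
  proof (cases i)
    case 0 thus ?thesis using Mv unfolding ws_def lam_def by simp
  next
    case (Suc i')
    have i': "i' < k" using that Suc sucN by simp
    have "M *\<^sub>v (Q *\<^sub>v yh i') = (M * Q) *\<^sub>v yh i'"
      using M QC yhC[OF i'] by (simp add: assoc_mult_mat_vec)
    also have "\<dots> = (Q * B) *\<^sub>v yh i'" using QB by simp
    also have "\<dots> = Q *\<^sub>v (B *\<^sub>v yh i')" using BC QC yhC[OF i'] by (simp add: assoc_mult_mat_vec)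
    also have "\<dots> = mu i' \<cdot>\<^sub>v (Q *\<^sub>v yh i')" using Byh[OF i'] QC yhC[OF i']
      by (simp add: mult_mat_vec)
    finally show ?thesis using Suc ws_i[OF i'] unfolding lam_def by simp
  qed
  have orth: "ws ! i \<bullet> ws ! j = (if i = j then 1 else 0)" if "i < N" "j < N" for i j
  proof -
    have w0: "ws ! 0 = Q *\<^sub>v unit_vec N 0" unfolding ws_def using vQ by simp
    have e0yh: "unit_vec N 0 \<bullet> yh a = 0" if "a < k" for a
      using scalar_prod_left_unit[OF yhC[OF that] Npos] by (simp add: yh_def)
    have yhe0: "yh a \<bullet> unit_vec N 0 = 0" if "a < k" for a
      using scalar_prod_right_unit[OF Npos, of "yh a"] by (simp add: yh_def)
    show ?thesis
    proof (cases i)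
      case 0
      show ?thesis
      proof (cases j)
        case 0 thus ?thesis using \<open>i = 0\<close> v1 unfolding ws_def by simp
      next
        case (Suc j')
        have j': "j' < k" using that Suc sucN by simp
        show ?thesis using \<open>i = 0\<close> Suc w0 ws_i[OF j'] orth_dot[OF Q e0C yhC[OF j']] e0yh[OF j'] by simp
      qed
    next
      case (Suc i')
      have i': "i' < k" using that Suc sucN by simp
      show ?thesis
      proof (cases j)
        case 0
        show ?thesis using \<open>j = 0\<close> Suc w0 ws_i[OF i'] orth_dot[OF Q yhC[OF i'] e0C] yhe0[OF i'] by simp
      next
        case (Suc j')
        have j': "j' < k" using that Suc sucN by simp
        show ?thesis using \<open>i = Suc i'\<close> Suc ws_i[OF i'] ws_i[OF j'] orth_dot[OF Q yhC[OF i'] yhC[OF j']]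
          dot_yh[OF i' j'] ys(3) i' j' by simp
      qed
    qed
  qed
  show ?case using len wsC orth ev unfolding N_def by blast
qed



unbundle no vec_syntax
unbundle no inner_syntax

lemma prod_list_map_upt: "prod_list (map f [0..<n]) = (\<Prod>i<n. f i)"
  by (induct n) (auto simp: lessThan_Suc mult.commute)

lemma order_prod_linear:
  fixes f :: "nat \<Rightarrow> real"
  shows "Polynomial.order x (\<Prod>i<n. [:- f i, 1:]) = card {i. i < n \<and> f i = x}"
proof (induct n)
  case 0 thus ?case by (simp add: order_1_eq_0)
next
  case (Suc n)
  have nz: "(\<Prod>i<n. [:- f i, 1:]) \<noteq> 0" by (auto simp: prod_zero_iff)
  have "Polynomial.order x (\<Prod>i<Suc n. [:- f i, 1:]) =
        Polynomial.order x ((\<Prod>i<n. [:- f i, 1:]) * [:- f n, 1:])"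
    by (simp add: lessThan_Suc mult.commute)
  also have "\<dots> = Polynomial.order x (\<Prod>i<n. [:- f i, 1:]) + Polynomial.order x [:- f n, 1:]"
    using nz by (intro order_mult) (metis mult_eq_0_iff nz pCons_eq_0_iff one_neq_zero)
  also have "\<dots> = card {i. i < n \<and> f i = x} + (if f n = x then 1 else 0)"
    using Suc by (simp add: order_linear')
  also have "\<dots> = card {i. i < Suc n \<and> f i = x}"
  proof (cases "f n = x")
    case True
    have "{i. i < Suc n \<and> f i = x} = insert n {i. i < n \<and> f i = x}" using True by auto
    thus ?thesis using True by simp
  next
    case False
    have "{i. i < Suc n \<and> f i = x} = {i. i < n \<and> f i = x}" using False less_Suc_eq by auto
    thus ?thesis using False by simp
  qed
  finally show ?case .
qed

lemma poly_prod_linear_zero: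
  fixes f :: "nat \<Rightarrow> real"
  shows "poly (\<Prod>i<n. [:- f i, 1:]) x = 0 \<longleftrightarrow> x \<in> f ` {..<n}"
  by (auto simp: poly_prod prod_zero_iff)

lemma sum_roots_prod_linear:
  fixes f :: "nat \<Rightarrow> real" and n :: nat and g :: "real \<Rightarrow> real"
  shows "(\<Sum>x\<in>{x. poly (\<Prod>i<n. [:- f i, 1:]) x = 0}. real (Polynomial.order x (\<Prod>i<n. [:- f i, 1:])) * g x)
     = (\<Sum>i<n. g (f i))"
proof -
  have roots: "{x. poly (\<Prod>i<n. [:- f i, 1:]) x = 0} = f ` {..<n}" using poly_prod_linear_zero by auto
  have "(\<Sum>i<n. g (f i)) = (\<Sum>y\<in>f ` {..<n}. \<Sum>i\<in>{i \<in> {..<n}. f i = y}. g (f i))"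
    by (rule sum.image_gen) simp
  also have "\<dots> = (\<Sum>y\<in>f ` {..<n}. real (card {i. i < n \<and> f i = y}) * g y)"
    by (intro sum.cong refl) auto
  also have "\<dots> = (\<Sum>x\<in>{x. poly (\<Prod>i<n. [:- f i, 1:]) x = 0}. real (Polynomial.order x (\<Prod>i<n. [:- f i, 1:])) * g x)"
    unfolding roots order_prod_linear ..
  finally show ?thesis by simp
qed

definition diagm :: "nat \<Rightarrow> (nat \<Rightarrow> real) \<Rightarrow> real mat" where
  "diagm n f = mat n n (\<lambda>(i,j). if i = j then f i else 0)"

lemma orth_mat_of_list:
  assumes len: "length ws = n" and C: "set ws \<subseteq> carrier_vec n"
    and on: "\<forall>i<n. \<forall>j<n. ws ! i \<bullet> ws ! j = (if i = j then 1 else 0)"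
  shows "orth_mat n (mat_of_cols n ws)"
  unfolding orth_mat_def
proof (intro conjI allI impI)
  show "mat_of_cols n ws \<in> carrier_mat n n" using len by auto
  fix i j assume i: "i < n" and j: "j < n"
  have Ci: "ws ! i \<in> carrier_vec n" and Cj: "ws ! j \<in> carrier_vec n" using C len i j by auto
  have "(\<Sum>l<n. mat_of_cols n ws $$ (l, i) * mat_of_cols n ws $$ (l, j)) = ws ! i \<bullet> ws ! j"
    using i j len Ci Cj by (simp add: scalar_prod_sum[of _ n] mat_of_cols_def)
  thus "(\<Sum>l<n. mat_of_cols n ws $$ (l, i) * mat_of_cols n ws $$ (l, j)) = (if i = j then 1 else 0)"
    using on i j by simp
qed

lemma char_poly_eigbasis:
  fixes M :: "real mat"
  assumes M: "M \<in> carrier_mat n n"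
    and len: "length ws = n" and C: "set ws \<subseteq> carrier_vec n"
    and on: "\<forall>i<n. \<forall>j<n. ws ! i \<bullet> ws ! j = (if i = j then 1 else 0)"
    and ev: "\<forall>i<n. M *\<^sub>v ws ! i = lam i \<cdot>\<^sub>v ws ! i"
  shows "char_poly M = (\<Prod>i<n. [:- lam i, 1:])"
proof -
  define W where "W = mat_of_cols n ws"
  have W: "orth_mat n W" unfolding W_def by (rule orth_mat_of_list[OF len C on])
  have WC: "W \<in> carrier_mat n n" using W unfolding orth_mat_def by auto
  define D where "D = diagm n lam"
  have DC: "D \<in> carrier_mat n n" unfolding D_def diagm_def by auto
  have Wi: "W $$ (a,i) = ws ! i $ a" if "a < n" "i < n" for a i
    using that len unfolding W_def mat_of_cols_def by simp
  have MW: "M * W = W * D"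
  proof (rule eq_matI)
    fix a i assume a: "a < dim_row (W * D)" and i: "i < dim_col (W * D)"
    hence a: "a < n" and i: "i < n" using WC DC by auto
    have wC: "ws ! i \<in> carrier_vec n" using C len i by auto
    have "(M * W) $$ (a,i) = (\<Sum>l<n. M $$ (a,l) * W $$ (l,i))"
      using M WC a i by (rule mult_mat_sum)
    also have "\<dots> = (M *\<^sub>v ws ! i) $ a"
      using a i wC by (simp add: mult_mat_vec_sum[OF M wC a] Wi)
    also have "\<dots> = lam i * ws ! i $ a" using ev i a wC by simp
    also have "\<dots> = (\<Sum>l<n. W $$ (a,l) * D $$ (l,i))"
    proof -
      have "(\<Sum>l<n. W $$ (a,l) * D $$ (l,i)) = (\<Sum>l<n. if l = i then W $$ (a,i) * lam i else 0)"
        using a i by (intro sum.cong refl) (auto simp: D_def diagm_def)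
      also have "\<dots> = W $$ (a,i) * lam i" using i by simp
      finally show ?thesis using Wi[OF a i] by simp
    qed
    also have "\<dots> = (W * D) $$ (a,i)" by (rule mult_mat_sum[OF WC DC a i, symmetric])
    finally show "(M * W) $$ (a,i) = (W * D) $$ (a,i)" .
  qed (use M WC DC in auto)
  have "M = M * (W * transpose_mat W)" using orth_mat_QT[OF W] M by simp
  also have "\<dots> = (M * W) * transpose_mat W" using M WC by (simp add: assoc_mult_mat[of _ n n _ n _ n])
  also have "\<dots> = W * D * transpose_mat W" unfolding MW ..
  finally have MWD: "M = W * D * transpose_mat W" .
  have "similar_mat M D" unfolding similar_mat_def
    by (rule exI[of _ W], rule exI[of _ "transpose_mat W"], rule similar_mat_witI[of _ _ n])
       (use orth_mat_QT[OF W] orth_mat_TQ[OF W] MWD M DC WC in auto)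
  hence "char_poly M = char_poly D" by (rule char_poly_similar)
  also have "\<dots> = (\<Prod>a\<leftarrow>diag_mat D. [:- a, 1:])"
    by (rule char_poly_upper_triangular[OF DC]) (auto simp: upper_triangular_def D_def diagm_def)
  also have "diag_mat D = map lam [0..<n]" unfolding D_def diagm_def diag_mat_def by auto
  also have "(\<Prod>a\<leftarrow>map lam [0..<n]. [:- a, 1:]) = (\<Prod>i<n. [:- lam i, 1:])"
    by (simp add: prod_list_map_upt[of "\<lambda>i. [:- lam i, 1:]", symmetric] o_def)
  finally show ?thesis .
qed

lemma svd_data:
  fixes A :: "real mat"
  assumes A: "A \<in> carrier_mat m n"
  shows "\<exists>w lam. (\<forall>i<n. \<forall>j<n. (\<Sum>l<n. w i l * w j l) = (if i = j then 1 else 0))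
    \<and> (\<forall>j<n. \<forall>b<n. (\<Sum>i<n. w i j * w i b) = (if j = b then 1 else 0))
    \<and> (\<forall>i<n. \<forall>j<n. (\<Sum>a<m. (\<Sum>l<n. A $$ (a,l) * w i l) * (\<Sum>l<n. A $$ (a,l) * w j l))
          = (if i = j then lam i else 0))
    \<and> (\<forall>i<n. lam i \<ge> 0)
    \<and> nuclear_norm A = (\<Sum>i<n. sqrt (lam i))"
proof -
  define M where "M = transpose_mat A * A"
  have MC: "M \<in> carrier_mat n n" unfolding M_def using A by auto
  have Msym: "transpose_mat M = M" unfolding M_def using A
    by (simp add: transpose_mult[of _ n m _ n])
  obtain ws lam where len: "length ws = n" and C: "set ws \<subseteq> carrier_vec n"
    and on: "\<forall>i<n. \<forall>j<n. ws ! i \<bullet> ws ! j = (if i = j then 1 else 0)"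
    and ev: "\<forall>i<n. M *\<^sub>v ws ! i = lam i \<cdot>\<^sub>v ws ! i"
    using spectral[OF MC Msym] by blast
  define w where "w = (\<lambda>i l. ws ! i $ l)"
  define W where "W = mat_of_cols n ws"
  have W: "orth_mat n W" unfolding W_def by (rule orth_mat_of_list[OF len C on])
  have Wi: "W $$ (a,i) = w i a" if "a < n" "i < n" for a i
    using that len unfolding W_def mat_of_cols_def w_def by simp
  have wC: "ws ! i \<in> carrier_vec n" if "i < n" for i using C len that by auto
  have F1: "(\<Sum>l<n. w i l * w j l) = (if i = j then 1 else 0)" if "i < n" "j < n" for i j
  proof -
    have "(\<Sum>l<n. w i l * w j l) = ws ! i \<bullet> ws ! j"
      unfolding w_def by (rule scalar_prod_sum[OF wC[OF that(1)] wC[OF that(2)], symmetric])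
    thus ?thesis using on that by simp
  qed
  have F2: "(\<Sum>i<n. w i j * w i b) = (if j = b then 1 else 0)" if "j < n" "b < n" for j b
    using orth_mat_rows[OF W that] that by (simp add: Wi)
  have Mlk: "M $$ (l,k) = (\<Sum>a<m. A $$ (a,l) * A $$ (a,k))" if "l < n" "k < n" for l k
    unfolding M_def using A that by (subst mult_mat_sum[of _ n m _ n]) auto
  have Mw: "(\<Sum>k<n. M $$ (l,k) * w j k) = lam j * w j l" if "l < n" "j < n" for l j
  proof -
    have "(\<Sum>k<n. M $$ (l,k) * w j k) = (M *\<^sub>v ws ! j) $ l"
      unfolding w_def by (rule mult_mat_vec_sum[OF MC wC[OF that(2)] that(1), symmetric])
    also have "\<dots> = lam j * w j l" using ev that wC[OF that(2)] unfolding w_def by simp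
    finally show ?thesis .
  qed
  have F3: "(\<Sum>a<m. (\<Sum>l<n. A $$ (a,l) * w i l) * (\<Sum>k<n. A $$ (a,k) * w j k))
          = lam j * (\<Sum>l<n. w i l * w j l)" if "i < n" "j < n" for i j
  proof -
    have "(\<Sum>a<m. (\<Sum>l<n. A $$ (a,l) * w i l) * (\<Sum>k<n. A $$ (a,k) * w j k))
        = (\<Sum>a<m. \<Sum>l<n. \<Sum>k<n. w i l * (A $$ (a,l) * A $$ (a,k) * w j k))"
      by (simp add: sum_product mult_ac)
    also have "\<dots> = (\<Sum>l<n. \<Sum>k<n. \<Sum>a<m. w i l * (A $$ (a,l) * A $$ (a,k) * w j k))"
      apply (rule trans[OF sum.swap]) apply (rule sum.cong[OF refl]) by (rule sum.swap)
    also have "\<dots> = (\<Sum>l<n. w i l * (\<Sum>k<n. M $$ (l,k) * w j k))"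
      by (intro sum.cong refl) (simp add: Mlk sum_distrib_left sum_distrib_right mult_ac)
    also have "\<dots> = (\<Sum>l<n. w i l * (lam j * w j l))"
      using that by (intro sum.cong refl) (simp add: Mw)
    also have "\<dots> = lam j * (\<Sum>l<n. w i l * w j l)" by (simp add: sum_distrib_left mult_ac)
    finally show ?thesis .
  qed
  have lam_eq: "lam i = (\<Sum>a<m. (\<Sum>l<n. A $$ (a,l) * w i l) * (\<Sum>l<n. A $$ (a,l) * w i l))"
    if "i < n" for i
    using F3[OF that that] F1[OF that that] by simp
  have lam_nn: "lam i \<ge> 0" if "i < n" for i
    unfolding lam_eq[OF that] by (intro sum_nonneg) auto
  have "char_poly M = (\<Prod>i<n. [:- lam i, 1:])"
    by (rule char_poly_eigbasis[OF MC len C on ev])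
  hence nuc: "nuclear_norm A = (\<Sum>i<n. sqrt (lam i))"
    unfolding nuclear_norm_def Let_def M_def[symmetric] by (simp add: sum_roots_prod_linear)
  show ?thesis
    by (rule exI[of _ w], rule exI[of _ lam]) (use F1 F2 F3 F1 lam_nn nuc in auto)
qed



unbundle no vec_syntax
unbundle no inner_syntax

lemma sum_le_sqrt:
  fixes a b :: "nat \<Rightarrow> real"
  shows "(\<Sum>i\<in>I. a i * b i) \<le> sqrt (\<Sum>i\<in>I. (a i)\<^sup>2) * sqrt (\<Sum>i\<in>I. (b i)\<^sup>2)"
proof -
  have "(\<Sum>i\<in>I. a i * b i) \<le> sqrt ((\<Sum>i\<in>I. a i * b i)\<^sup>2)" by simp
  also have "\<dots> \<le> sqrt ((\<Sum>i\<in>I. (a i)\<^sup>2) * (\<Sum>i\<in>I. (b i)\<^sup>2))"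
    by (rule real_sqrt_le_mono[OF Cauchy_Schwarz_ineq_sum])
  also have "\<dots> = sqrt (\<Sum>i\<in>I. (a i)\<^sup>2) * sqrt (\<Sum>i\<in>I. (b i)\<^sup>2)" by (rule real_sqrt_mult)
  finally show ?thesis .
qed

lemma bessel:
  fixes e :: "nat \<Rightarrow> nat \<Rightarrow> real" and x :: "nat \<Rightarrow> real"
  assumes I: "finite I"
    and on: "\<And>i j. i \<in> I \<Longrightarrow> j \<in> I \<Longrightarrow> (\<Sum>l<K. e i l * e j l) = (if i = j then 1 else 0)"
  shows "(\<Sum>i\<in>I. (\<Sum>l<K. e i l * x l)\<^sup>2) \<le> (\<Sum>l<K. (x l)\<^sup>2)"
proof -
  define c where "c = (\<lambda>i. \<Sum>l<K. e i l * x l)"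
  define s where "s = (\<lambda>l. \<Sum>i\<in>I. c i * e i l)"
  have xs: "(\<Sum>l<K. x l * s l) = (\<Sum>i\<in>I. (c i)\<^sup>2)"
  proof -
    have "(\<Sum>l<K. x l * s l) = (\<Sum>l<K. \<Sum>i\<in>I. c i * (e i l * x l))"
      unfolding s_def by (simp add: sum_distrib_left mult_ac)
    also have "\<dots> = (\<Sum>i\<in>I. \<Sum>l<K. c i * (e i l * x l))" by (rule sum.swap)
    also have "\<dots> = (\<Sum>i\<in>I. (c i)\<^sup>2)" unfolding c_def
      by (simp add: sum_distrib_left power2_eq_square)
    finally show ?thesis .
  qed
  have ss: "(\<Sum>l<K. (s l)\<^sup>2) = (\<Sum>i\<in>I. (c i)\<^sup>2)"
  proof -
    have "(\<Sum>l<K. (s l)\<^sup>2) = (\<Sum>l<K. \<Sum>i\<in>I. \<Sum>j\<in>I. c i * c j * (e i l * e j l))"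
      unfolding s_def power2_eq_square by (simp add: sum_product mult_ac)
    also have "\<dots> = (\<Sum>i\<in>I. \<Sum>j\<in>I. \<Sum>l<K. c i * c j * (e i l * e j l))"
      apply (rule trans[OF sum.swap]) apply (rule sum.cong[OF refl]) by (rule sum.swap)
    also have "\<dots> = (\<Sum>i\<in>I. \<Sum>j\<in>I. c i * c j * (if i = j then 1 else 0))"
      by (intro sum.cong refl) (simp add: sum_distrib_left[symmetric] on)
    also have "\<dots> = (\<Sum>i\<in>I. (c i)\<^sup>2)" using I by (simp add: power2_eq_square if_distrib cong: if_cong)
    finally show ?thesis .
  qed
  have "0 \<le> (\<Sum>l<K. (x l - s l)\<^sup>2)" by (intro sum_nonneg) auto
  also have "\<dots> = (\<Sum>l<K. (x l)\<^sup>2) - 2 * (\<Sum>l<K. x l * s l) + (\<Sum>l<K. (s l)\<^sup>2)"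
    by (simp add: power2_diff sum_subtractf sum.distrib sum_distrib_left mult_ac)
  finally show ?thesis unfolding xs ss c_def by simp
qed

definition regU :: "nat \<Rightarrow> nat \<Rightarrow> nat \<Rightarrow> real mat \<Rightarrow> real mat \<Rightarrow> real" where
  "regU m n d U V = (\<Sum>k<d. (\<Sum>a<m. (U $$ (a,k))\<^sup>2) * (\<Sum>b<n. (V $$ (b,k))\<^sup>2))"

lemma nuclear_le_factor:
  fixes U V :: "real mat"
  assumes U: "U \<in> carrier_mat m d" and V: "V \<in> carrier_mat n d"
  shows "nuclear_norm (U * transpose_mat V) \<le>
    (\<Sum>k<d. sqrt (\<Sum>a<m. (U $$ (a,k))\<^sup>2) * sqrt (\<Sum>b<n. (V $$ (b,k))\<^sup>2))"
proof -
  define A where "A = U * transpose_mat V"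
  have A: "A \<in> carrier_mat m n" unfolding A_def using U V by auto
  have Aal: "A $$ (a,l) = (\<Sum>k<d. U $$ (a,k) * V $$ (l,k))" if "a < m" "l < n" for a l
    unfolding A_def using U V that by (subst mult_mat_sum[of _ m d _ n]) auto
  obtain w lam where F1: "\<forall>i<n. \<forall>j<n. (\<Sum>l<n. w i l * w j l) = (if i = j then 1 else 0)"
    and F3: "\<forall>i<n. \<forall>j<n. (\<Sum>a<m. (\<Sum>l<n. A $$ (a,l) * w i l) * (\<Sum>l<n. A $$ (a,l) * w j l))
          = (if i = j then lam i else 0)"
    and lnn: "\<forall>i<n. lam i \<ge> 0"
    and nuc: "nuclear_norm A = (\<Sum>i<n. sqrt (lam i))"
    using svd_data[OF A] by blast
  define I where "I = {i. i < n \<and> lam i > 0}"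
  have I: "finite I" "I \<subseteq> {..<n}" unfolding I_def by auto
  define Aw where "Aw = (\<lambda>i a. \<Sum>l<n. A $$ (a,l) * w i l)"
  define z where "z = (\<lambda>i a. Aw i a / sqrt (lam i))"
  define alpha where "alpha = (\<lambda>i k. \<Sum>a<m. z i a * U $$ (a,k))"
  define beta where "beta = (\<lambda>i k. \<Sum>l<n. w i l * V $$ (l,k))"
  have nucI: "nuclear_norm A = (\<Sum>i\<in>I. sqrt (lam i))"
  proof -
    have "(\<Sum>i<n. sqrt (lam i)) = (\<Sum>i\<in>I. sqrt (lam i))"
      by (rule sum.mono_neutral_right) (use lnn in \<open>auto simp: I_def\<close>)
    thus ?thesis using nuc by simp
  qed
  have Aw_exp: "Aw i a = (\<Sum>k<d. U $$ (a,k) * beta i k)" if "a < m" for i a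
  proof -
    have "Aw i a = (\<Sum>l<n. \<Sum>k<d. U $$ (a,k) * (w i l * V $$ (l,k)))"
      unfolding Aw_def using that by (intro sum.cong refl) (simp add: Aal sum_distrib_left sum_distrib_right mult_ac)
    also have "\<dots> = (\<Sum>k<d. \<Sum>l<n. U $$ (a,k) * (w i l * V $$ (l,k)))" by (rule sum.swap)
    also have "\<dots> = (\<Sum>k<d. U $$ (a,k) * beta i k)" unfolding beta_def by (simp add: sum_distrib_left)
    finally show ?thesis .
  qed
  have sig: "sqrt (lam i) = (\<Sum>k<d. alpha i k * beta i k)" if "i \<in> I" for i
  proof -
    have i: "i < n" "lam i > 0" using that unfolding I_def by auto
    have "(\<Sum>a<m. Aw i a * Aw i a) = lam i" using F3 i unfolding Aw_def by auto
    hence "sqrt (lam i) = (\<Sum>a<m. z i a * Aw i a)" unfolding z_def using i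
      by (simp add: sum_divide_distrib[symmetric] field_simps)
    also have "\<dots> = (\<Sum>a<m. \<Sum>k<d. z i a * U $$ (a,k) * beta i k)"
      by (intro sum.cong refl) (simp add: Aw_exp sum_distrib_left mult_ac)
    also have "\<dots> = (\<Sum>k<d. \<Sum>a<m. z i a * U $$ (a,k) * beta i k)" by (rule sum.swap)
    also have "\<dots> = (\<Sum>k<d. alpha i k * beta i k)" unfolding alpha_def by (simp add: sum_distrib_right)
    finally show ?thesis .
  qed
  have zon: "(\<Sum>a<m. z i a * z j a) = (if i = j then 1 else 0)" if "i \<in> I" "j \<in> I" for i j
  proof -
    have i: "i < n" "lam i > 0" and j: "j < n" "lam j > 0" using that unfolding I_def by auto
    have "(\<Sum>a<m. z i a * z j a) = (\<Sum>a<m. Aw i a * Aw j a) / (sqrt (lam i) * sqrt (lam j))"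
      unfolding z_def by (simp add: sum_divide_distrib)
    also have "\<dots> = (if i = j then lam i else 0) / (sqrt (lam i) * sqrt (lam j))"
      using F3 i j unfolding Aw_def by auto
    also have "\<dots> = (if i = j then 1 else 0)" using i by auto
    finally show ?thesis .
  qed
  have won: "(\<Sum>l<n. w i l * w j l) = (if i = j then 1 else 0)" if "i \<in> I" "j \<in> I" for i j
    using F1 that unfolding I_def by auto
  have "nuclear_norm A = (\<Sum>i\<in>I. \<Sum>k<d. alpha i k * beta i k)" unfolding nucI
    by (intro sum.cong refl) (simp add: sig)
  also have "\<dots> = (\<Sum>k<d. \<Sum>i\<in>I. alpha i k * beta i k)" by (rule sum.swap)
  also have "\<dots> \<le> (\<Sum>k<d. sqrt (\<Sum>i\<in>I. (alpha i k)\<^sup>2) * sqrt (\<Sum>i\<in>I. (beta i k)\<^sup>2))"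
    by (intro sum_mono sum_le_sqrt)
  also have "\<dots> \<le> (\<Sum>k<d. sqrt (\<Sum>a<m. (U $$ (a,k))\<^sup>2) * sqrt (\<Sum>b<n. (V $$ (b,k))\<^sup>2))"
  proof (intro sum_mono mult_mono real_sqrt_le_mono)
    fix k
    show "(\<Sum>i\<in>I. (alpha i k)\<^sup>2) \<le> (\<Sum>a<m. (U $$ (a,k))\<^sup>2)"
      unfolding alpha_def by (rule bessel[OF I(1) zon])
    show "(\<Sum>i\<in>I. (beta i k)\<^sup>2) \<le> (\<Sum>b<n. (V $$ (b,k))\<^sup>2)"
      unfolding beta_def by (rule bessel[OF I(1) won])
  qed (auto intro!: sum_nonneg)
  finally show ?thesis unfolding A_def .
qed

lemma nuclear_sq_le_reg:
  fixes U V :: "real mat"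
  assumes U: "U \<in> carrier_mat m d" and V: "V \<in> carrier_mat n d"
  shows "(nuclear_norm (U * transpose_mat V))\<^sup>2 \<le> real d * regU m n d U V"
proof -
  define x where "x = (\<lambda>k. sqrt (\<Sum>a<m. (U $$ (a,k))\<^sup>2) * sqrt (\<Sum>b<n. (V $$ (b,k))\<^sup>2))"
  have x2: "(x k)\<^sup>2 = (\<Sum>a<m. (U $$ (a,k))\<^sup>2) * (\<Sum>b<n. (V $$ (b,k))\<^sup>2)" for k
    unfolding x_def by (simp add: power_mult_distrib sum_nonneg)
  have nn: "0 \<le> nuclear_norm (U * transpose_mat V)"
  proof -
    obtain w lam where "\<forall>i<n. lam i \<ge> 0" "nuclear_norm (U * transpose_mat V) = (\<Sum>i<n. sqrt (lam i))"
      using svd_data[of "U * transpose_mat V" m n] U V by auto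
    thus ?thesis by (auto intro!: sum_nonneg)
  qed
  have "(nuclear_norm (U * transpose_mat V))\<^sup>2 \<le> (\<Sum>k<d. 1 * x k)\<^sup>2"
    using nuclear_le_factor[OF U V] nn unfolding x_def by (simp add: power_mono)
  also have "\<dots> \<le> (\<Sum>k<d. 1\<^sup>2) * (\<Sum>k<d. (x k)\<^sup>2)" by (rule Cauchy_Schwarz_ineq_sum)
  also have "\<dots> = real d * regU m n d U V" unfolding regU_def x2 by simp
  finally show ?thesis .
qed



unbundle no vec_syntax
unbundle no inner_syntax

lemma mult_mat_sum':
  assumes "A \<in> carrier_mat m k" "B \<in> carrier_mat k n" "i < m" "j < n"
  shows "(A * B) $$ (i,j) = (\<Sum>l<k. A $$ (i,l) * B $$ (l,j))"
  using assms by (auto simp: scalar_prod_def atLeast0LessThan intro!: sum.cong)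

lemma Pi_pmf_finite_support:
  fixes d :: nat
  shows "finite (set_pmf (Pi_pmf {..<d} False (\<lambda>_. bernoulli_pmf q)))"
proof -
  have "finite (PiE_dflt {..<d} False (set_pmf \<circ> (\<lambda>_. bernoulli_pmf q)))"
    by (rule finite_PiE_dflt) auto
  thus ?thesis using set_Pi_pmf_subset'[of "{..<d}" False "\<lambda>_. bernoulli_pmf q"]
    by (auto intro: finite_subset)
qed

lemma expectation_prod_R:
  fixes d :: nat and q :: real
  assumes q: "0 \<le> q" "q \<le> 1" and S: "S \<subseteq> {..<d}"
  shows "measure_pmf.expectation (Pi_pmf {..<d} False (\<lambda>_. bernoulli_pmf q))
           (\<lambda>r. \<Prod>x\<in>S. (of_bool (r x) :: real)) = q ^ card S"
proof -
  have fS: "finite S" using S finite_subset by auto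
  have eq: "(\<Prod>x\<in>S. (of_bool (r x) :: real)) =
        (\<Prod>x\<in>{..<d}. (\<lambda>x v. if x \<in> S then of_bool v else 1) x (r x))" for r :: "nat \<Rightarrow> bool"
  proof -
    have "(\<Prod>x\<in>{..<d}. (if x \<in> S then (of_bool (r x) :: real) else 1)) = (\<Prod>x\<in>{..<d} \<inter> S. of_bool (r x))"
      by (rule prod.inter_restrict[symmetric]) simp
    also have "{..<d} \<inter> S = S" using S by auto
    finally show ?thesis by simp
  qed
  have "measure_pmf.expectation (Pi_pmf {..<d} False (\<lambda>_. bernoulli_pmf q))
           (\<lambda>r. \<Prod>x\<in>S. (of_bool (r x) :: real)) =
        (\<Prod>x\<in>{..<d}. measure_pmf.expectation (bernoulli_pmf q) (\<lambda>v. (\<lambda>x v. if x \<in> S then of_bool v else (1::real)) x v))"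
    unfolding eq
    by (rule expectation_prod_Pi_pmf) (auto intro: integrable_measure_pmf_finite)
  also have "\<dots> = (\<Prod>x\<in>{..<d}. if x \<in> S then q else 1)"
    using q by (intro prod.cong refl) (auto simp: integral_bernoulli_pmf)
  also have "\<dots> = (\<Prod>x\<in>{..<d} \<inter> S. q)" by (rule prod.inter_restrict[symmetric]) simp
  also have "{..<d} \<inter> S = S" using S by auto
  finally show ?thesis by simp
qed

lemma expectation_entry:
  fixes t :: "nat \<Rightarrow> real" and x q :: real and d :: nat
  assumes q: "0 < q" "q \<le> 1"
  shows "measure_pmf.expectation (Pi_pmf {..<d} False (\<lambda>_. bernoulli_pmf q))
           (\<lambda>r. (x - (1/q) * (\<Sum>k<d. t k * of_bool (r k)))\<^sup>2)
         = (x - (\<Sum>k<d. t k))\<^sup>2 + (1/q - 1) * (\<Sum>k<d. (t k)\<^sup>2)"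
proof -
  define P where "P = Pi_pmf {..<d} False (\<lambda>_. bernoulli_pmf q)"
  define R where "R = (\<lambda>(r :: nat \<Rightarrow> bool) k. (of_bool (r k) :: real))"
  have int: "integrable (measure_pmf P) f" for f :: "(nat \<Rightarrow> bool) \<Rightarrow> real"
    unfolding P_def by (rule integrable_measure_pmf_finite[OF Pi_pmf_finite_support])
  have E1: "measure_pmf.expectation P (\<lambda>r. R r k) = q" if "k < d" for k
    using expectation_prod_R[of q "{k}" d] q that unfolding P_def R_def by auto
  have E2: "measure_pmf.expectation P (\<lambda>r. R r k * R r l) = (if k = l then q else q\<^sup>2)"
    if "k < d" "l < d" for k l
  proof (cases "k = l")
    case True
    have "(\<lambda>r. R r k * R r l) = (\<lambda>r. R r k)"
      using True unfolding R_def by (auto simp: fun_eq_iff)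
    hence "measure_pmf.expectation P (\<lambda>r. R r k * R r l) = measure_pmf.expectation P (\<lambda>r. R r k)"
      by simp
    thus ?thesis using E1[OF that(1)] True by simp
  next
    case False
    have "(\<lambda>r. R r k * R r l) = (\<lambda>r. \<Prod>x\<in>{k,l}. (of_bool (r x) :: real))"
      using False unfolding R_def by auto
    hence "measure_pmf.expectation P (\<lambda>r. R r k * R r l) = q ^ card {k,l}"
      using expectation_prod_R[of q "{k,l}" d] q that unfolding P_def by auto
    thus ?thesis using False by (simp add: power2_eq_square)
  qed
  have pt: "(x - (1/q) * (\<Sum>k<d. t k * R r k))\<^sup>2 =
      x\<^sup>2 - (2 * x / q) * (\<Sum>k<d. t k * R r k) + (1/q)\<^sup>2 * (\<Sum>k<d. \<Sum>l<d. t k * t l * (R r k * R r l))" for r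
  proof -
    have g: "(x - (1/q) * Y)\<^sup>2 = x\<^sup>2 - (2 * x / q) * Y + (1/q)\<^sup>2 * Y\<^sup>2" for Y
      using q by (simp add: power2_eq_square field_simps)
    have "(\<Sum>k<d. t k * R r k)\<^sup>2 = (\<Sum>k<d. \<Sum>l<d. t k * t l * (R r k * R r l))"
      by (simp add: power2_eq_square sum_product mult_ac)
    thus ?thesis using g by simp
  qed
  have "measure_pmf.expectation P (\<lambda>r. (x - (1/q) * (\<Sum>k<d. t k * R r k))\<^sup>2)
      = x\<^sup>2 - (2 * x / q) * (\<Sum>k<d. t k * measure_pmf.expectation P (\<lambda>r. R r k))
        + (1/q)\<^sup>2 * (\<Sum>k<d. \<Sum>l<d. t k * t l * measure_pmf.expectation P (\<lambda>r. R r k * R r l))"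
    unfolding pt
    by (simp add: int integral_sum integral_diff integral_add integral_mult_right)
  also have "\<dots> = x\<^sup>2 - (2 * x / q) * (\<Sum>k<d. t k * q)
        + (1/q)\<^sup>2 * (\<Sum>k<d. \<Sum>l<d. t k * t l * (if k = l then q else q\<^sup>2))"
    by (simp add: E1 E2)
  also have "(\<Sum>k<d. \<Sum>l<d. t k * t l * (if k = l then q else q\<^sup>2)) =
     q\<^sup>2 * (\<Sum>k<d. t k)\<^sup>2 + (q - q\<^sup>2) * (\<Sum>k<d. (t k)\<^sup>2)"
  proof -
    have "(\<Sum>k<d. \<Sum>l<d. t k * t l * (if k = l then q else q\<^sup>2)) =
      (\<Sum>k<d. \<Sum>l<d. q\<^sup>2 * (t k * t l) + (if k = l then (q - q\<^sup>2) * (t k * t l) else 0))"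
      by (intro sum.cong refl) (auto simp: algebra_simps)
    also have "\<dots> = q\<^sup>2 * (\<Sum>k<d. \<Sum>l<d. t k * t l) + (q - q\<^sup>2) * (\<Sum>k<d. t k * t k)"
      by (simp add: sum.distrib sum_distrib_left)
    also have "\<dots> = q\<^sup>2 * (\<Sum>k<d. t k)\<^sup>2 + (q - q\<^sup>2) * (\<Sum>k<d. (t k)\<^sup>2)"
      by (simp add: power2_eq_square sum_product)
    finally show ?thesis .
  qed
  also have "x\<^sup>2 - (2 * x / q) * (\<Sum>k<d. t k * q) + (1/q)\<^sup>2 * (q\<^sup>2 * (\<Sum>k<d. t k)\<^sup>2 + (q - q\<^sup>2) * (\<Sum>k<d. (t k)\<^sup>2))
      = (x - (\<Sum>k<d. t k))\<^sup>2 + (1/q - 1) * (\<Sum>k<d. (t k)\<^sup>2)"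
    using q by (simp add: sum_distrib_right[symmetric] sum_distrib_left[symmetric] power2_diff field_simps power2_eq_square)
  finally show ?thesis unfolding P_def R_def by simp
qed

lemma theta_props:
  assumes p: "0 < p" "p < 1" and d: "0 < d"
  shows "0 < theta p d" "theta p d \<le> 1" "1 / theta p d - 1 = real d * (1 - p) / p"
proof -
  have den: "real d - (real d - 1) * p = real d * (1 - p) + p" by (simp add: algebra_simps)
  have dp: "real d * (1 - p) \<ge> 0" using p by simp
  have denpos: "real d - (real d - 1) * p > 0" unfolding den using p dp by linarith
  show "0 < theta p d" unfolding theta_def using p denpos by simp
  have "p \<le> real d - (real d - 1) * p" unfolding den using p d
    by (simp add: algebra_simps)
  thus "theta p d \<le> 1" unfolding theta_def using denpos by simp
  show "1 / theta p d - 1 = real d * (1 - p) / p" unfolding theta_def using p denpos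
    by (simp add: field_simps)
qed

lemma dropout_entry:
  fixes U V X :: "real mat" and r :: "nat \<Rightarrow> bool"
  assumes X: "X \<in> carrier_mat m n" and U: "U \<in> carrier_mat m d" and V: "V \<in> carrier_mat n d"
    and a: "a < m" and b: "b < n"
  shows "(X - c \<cdot>\<^sub>m (U * diag_bool d r * transpose_mat V)) $$ (a,b)
     = X $$ (a,b) - c * (\<Sum>k<d. (U $$ (a,k) * V $$ (b,k)) * of_bool (r k))"
proof -
  have D: "diag_bool d r \<in> carrier_mat d d" unfolding diag_bool_def by auto
  have UD: "(U * diag_bool d r) $$ (a,l) = U $$ (a,l) * of_bool (r l)" if "l < d" for l
  proof -
    have "(U * diag_bool d r) $$ (a,l) = (\<Sum>k<d. U $$ (a,k) * diag_bool d r $$ (k,l))"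
      by (rule mult_mat_sum'[OF U D a that])
    also have "\<dots> = (\<Sum>k<d. if k = l then U $$ (a,l) * of_bool (r l) else 0)"
      using that by (intro sum.cong refl) (auto simp: diag_bool_def)
    also have "\<dots> = U $$ (a,l) * of_bool (r l)" using that by simp
    finally show ?thesis .
  qed
  have UDC: "U * diag_bool d r \<in> carrier_mat m d" using U D by auto
  have VT: "transpose_mat V \<in> carrier_mat d n" using V by auto
  have "(U * diag_bool d r * transpose_mat V) $$ (a,b) = (\<Sum>l<d. (U * diag_bool d r) $$ (a,l) * transpose_mat V $$ (l,b))"
    by (rule mult_mat_sum'[OF UDC VT a b])
  also have "\<dots> = (\<Sum>k<d. (U $$ (a,k) * V $$ (b,k)) * of_bool (r k))"
    using V b by (intro sum.cong refl) (auto simp: UD)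
  finally have e: "(U * diag_bool d r * transpose_mat V) $$ (a,b) = (\<Sum>k<d. (U $$ (a,k) * V $$ (b,k)) * of_bool (r k))" .
  show ?thesis using X U V a b e by simp
qed

lemma frob_sq_carrier:
  assumes "M \<in> carrier_mat m n"
  shows "frob_sq M = (\<Sum>a<m. \<Sum>b<n. (M $$ (a,b))\<^sup>2)"
  using assms unfolding frob_sq_def by auto

lemma dropout_obj_eq:
  fixes p :: real and X U V :: "real mat" and m n d :: nat
  assumes p: "0 < p" "p < 1" and d: "0 < d" and X: "X \<in> carrier_mat m n"
    and U: "U \<in> carrier_mat m d" and V: "V \<in> carrier_mat n d"
  shows "dropout_obj p X d U V = frob_sq (X - U * transpose_mat V)
     + real d * (1 - p) / p * (\<Sum>k<d. (\<Sum>a<m. (U $$ (a,k))\<^sup>2) * (\<Sum>b<n. (V $$ (b,k))\<^sup>2))"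
proof -
  define q where "q = theta p d"
  note th = theta_props[OF p d, folded q_def]
  define P where "P = Pi_pmf {..<d} False (\<lambda>_. bernoulli_pmf q)"
  have int: "integrable (measure_pmf P) f" for f :: "(nat \<Rightarrow> bool) \<Rightarrow> real"
    unfolding P_def by (rule integrable_measure_pmf_finite[OF Pi_pmf_finite_support])
  define t where "t = (\<lambda>a b k. U $$ (a,k) * V $$ (b,k))"
  have fr: "frob_sq (X - (1 / q) \<cdot>\<^sub>m (U * diag_bool d r * transpose_mat V)) =
     (\<Sum>a<m. \<Sum>b<n. (X $$ (a,b) - (1/q) * (\<Sum>k<d. t a b k * of_bool (r k)))\<^sup>2)" for r
  proof -
    have C: "X - (1 / q) \<cdot>\<^sub>m (U * diag_bool d r * transpose_mat V) \<in> carrier_mat m n"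
      using X U V by (auto simp: diag_bool_def)
    show ?thesis unfolding frob_sq_carrier[OF C] t_def
      by (intro sum.cong refl) (simp add: dropout_entry[OF X U V])
  qed
  have "dropout_obj p X d U V = measure_pmf.expectation P
     (\<lambda>r. \<Sum>a<m. \<Sum>b<n. (X $$ (a,b) - (1/q) * (\<Sum>k<d. t a b k * of_bool (r k)))\<^sup>2)"
    unfolding dropout_obj_def P_def q_def[symmetric] fr ..
  also have "\<dots> = (\<Sum>a<m. \<Sum>b<n. measure_pmf.expectation P
     (\<lambda>r. (X $$ (a,b) - (1/q) * (\<Sum>k<d. t a b k * of_bool (r k)))\<^sup>2))"
    by (simp add: int integral_sum)
  also have "\<dots> = (\<Sum>a<m. \<Sum>b<n. (X $$ (a,b) - (\<Sum>k<d. t a b k))\<^sup>2 + (1/q - 1) * (\<Sum>k<d. (t a b k)\<^sup>2))"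
    unfolding P_def using th by (intro sum.cong refl) (rule expectation_entry)
  also have "\<dots> = (\<Sum>a<m. \<Sum>b<n. (X $$ (a,b) - (\<Sum>k<d. t a b k))\<^sup>2)
      + (1/q - 1) * (\<Sum>a<m. \<Sum>b<n. \<Sum>k<d. (t a b k)\<^sup>2)"
    by (simp add: sum.distrib sum_distrib_left)
  also have "(\<Sum>a<m. \<Sum>b<n. (X $$ (a,b) - (\<Sum>k<d. t a b k))\<^sup>2) = frob_sq (X - U * transpose_mat V)"
  proof -
    have C: "X - U * transpose_mat V \<in> carrier_mat m n" using X U V by auto
    show ?thesis unfolding frob_sq_carrier[OF C] t_def using X U V
      by (intro sum.cong refl) (auto simp: scalar_prod_def atLeast0LessThan)
  qed
  also have "(\<Sum>a<m. \<Sum>b<n. \<Sum>k<d. (t a b k)\<^sup>2) = (\<Sum>k<d. (\<Sum>a<m. (U $$ (a,k))\<^sup>2) * (\<Sum>b<n. (V $$ (b,k))\<^sup>2))"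
  proof -
    have "(\<Sum>a<m. \<Sum>b<n. \<Sum>k<d. (t a b k)\<^sup>2) = (\<Sum>a<m. \<Sum>k<d. \<Sum>b<n. (t a b k)\<^sup>2)"
      by (intro sum.cong refl sum.swap)
    also have "\<dots> = (\<Sum>k<d. \<Sum>a<m. \<Sum>b<n. (t a b k)\<^sup>2)" by (rule sum.swap)
    also have "\<dots> = (\<Sum>k<d. (\<Sum>a<m. (U $$ (a,k))\<^sup>2) * (\<Sum>b<n. (V $$ (b,k))\<^sup>2))"
      unfolding t_def by (simp add: power_mult_distrib sum_product)
    finally show ?thesis .
  qed
  finally show ?thesis using th(3) by simp
qed



unbundle no vec_syntax
unbundle no inner_syntax

lemma sum_list_concat_replicate:
  "sum_list (map F (concat (map (\<lambda>i. replicate (c i) i) [0..<n]))) = (\<Sum>i<n. real (c i) * F i)"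
  for F :: "nat \<Rightarrow> real"
  by (induct n) (auto simp: sum_list_replicate lessThan_Suc)

lemma sum_idx:
  fixes F :: "nat \<Rightarrow> real"
  shows "(\<Sum>k<length (concat (map (\<lambda>i. replicate (c i) i) [0..<n])).
            F (concat (map (\<lambda>i. replicate (c i) i) [0..<n]) ! k)) = (\<Sum>i<n. real (c i) * F i)"
proof -
  have "(\<Sum>k<length (concat (map (\<lambda>i. replicate (c i) i) [0..<n])).
            F (concat (map (\<lambda>i. replicate (c i) i) [0..<n]) ! k))
      = sum_list (map F (concat (map (\<lambda>i. replicate (c i) i) [0..<n])))"
    by (simp add: sum_list_sum_nth atLeast0LessThan)
  thus ?thesis unfolding sum_list_concat_replicate .
qed

lemma idx_lt:
  assumes "k < length (concat (map (\<lambda>i. replicate (c i) i) [0..<n]))"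
  shows "concat (map (\<lambda>i. replicate (c i) i) [0..<n]) ! k < n"
proof -
  have "concat (map (\<lambda>i. replicate (c i) i) [0..<n]) ! k \<in> set (concat (map (\<lambda>i. replicate (c i) i) [0..<n]))"
    using assms by (rule nth_mem)
  thus ?thesis by auto
qed

lemma nuclear_norm_nonneg:
  assumes "A \<in> carrier_mat m n" shows "nuclear_norm A \<ge> 0"
proof -
  obtain w lam where "\<forall>i<n. lam i \<ge> 0" "nuclear_norm A = (\<Sum>i<n. sqrt (lam i))"
    using svd_data[OF assms] by blast
  thus ?thesis by (auto intro!: sum_nonneg)
qed

lemma sq_aux: "(x::real)\<^sup>2 * y = x * (y * x)"
  by (simp add: power2_eq_square mult_ac)

lemma construct:
  fixes A :: "real mat" and N :: nat
  assumes A: "A \<in> carrier_mat m n" and N: "0 < N"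
  shows "\<exists>d U V. 0 < d \<and> U \<in> carrier_mat m d \<and> V \<in> carrier_mat n d \<and> U * transpose_mat V = A \<and>
    real d * (\<Sum>k<d. (\<Sum>a<m. (U $$ (a,k))\<^sup>2) * (\<Sum>b<n. (V $$ (b,k))\<^sup>2))
      \<le> (nuclear_norm A)\<^sup>2 + 2 * real n * nuclear_norm A / real N"
proof (cases "n = 0")
  case True
  let ?U = "0\<^sub>m m 1 :: real mat" and ?V = "0\<^sub>m n 1 :: real mat"
  have "?U * transpose_mat ?V = A" using A True by (intro eq_matI) auto
  moreover have "0 \<le> (nuclear_norm A)\<^sup>2 + 2 * real n * nuclear_norm A / real N" using True by simp
  ultimately show ?thesis
    by (intro exI[of _ 1] exI[of _ ?U] exI[of _ ?V]) (auto simp: True)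
next
  case False
  hence n: "0 < n" by simp
  obtain w lam where F1: "\<forall>i<n. \<forall>j<n. (\<Sum>l<n. w i l * w j l) = (if i = j then 1 else 0)"
    and F2: "\<forall>j<n. \<forall>b<n. (\<Sum>i<n. w i j * w i b) = (if j = b then 1 else 0)"
    and F3: "\<forall>i<n. \<forall>j<n. (\<Sum>a<m. (\<Sum>l<n. A $$ (a,l) * w i l) * (\<Sum>l<n. A $$ (a,l) * w j l))
          = (if i = j then lam i else 0)"
    and lnn: "\<forall>i<n. lam i \<ge> 0"
    and nuc: "nuclear_norm A = (\<Sum>i<n. sqrt (lam i))"
    using svd_data[OF A] by blast
  define S where "S = nuclear_norm A"
  define sg where "sg = (\<lambda>i. sqrt (max 0 (lam i)))"
  define c where "c = (\<lambda>i. nat \<lceil>real N * sg i\<rceil> + 1)"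
  define idx where "idx = concat (map (\<lambda>i. replicate (c i) i) [0..<n])"
  define d where "d = length idx"
  define Aw where "Aw = (\<lambda>i a. \<Sum>l<n. A $$ (a,l) * w i l)"
  define U where "U = mat m d (\<lambda>(a,k). Aw (idx ! k) a / real (c (idx ! k)))"
  define V where "V = mat n d (\<lambda>(b,k). w (idx ! k) b)"
  have idxn: "idx ! k < n" if "k < d" for k using idx_lt that unfolding d_def idx_def by blast
  have sumidx: "(\<Sum>k<d. F (idx ! k)) = (\<Sum>i<n. real (c i) * F i)" for F
    unfolding d_def idx_def by (rule sum_idx)
  have cpos: "real (c i) \<ge> 1" for i unfolding c_def by simp
  have cnz: "real (c i) \<noteq> 0" for i unfolding c_def by simp
  have sgnn: "sg i \<ge> 0" for i unfolding sg_def by simp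
  have S: "S = (\<Sum>i<n. sg i)" unfolding S_def sg_def nuc using lnn by (intro sum.cong refl) auto
  have Snn: "S \<ge> 0" unfolding S by (intro sum_nonneg sgnn)
  have dsum: "real d = (\<Sum>i<n. real (c i))" using sumidx[of "\<lambda>_. 1"] by simp
  have dpos: "0 < d"
  proof -
    have "real (c 0) \<le> (\<Sum>i<n. real (c i))" using n by (intro member_le_sum) auto
    thus ?thesis using dsum cpos[of 0] by linarith
  qed
  have UC: "U \<in> carrier_mat m d" and VC: "V \<in> carrier_mat n d" unfolding U_def V_def by auto
  have prod: "U * transpose_mat V = A"
  proof (rule eq_matI)
    fix a b assume "a < dim_row A" "b < dim_col A"
    hence a: "a < m" and b: "b < n" using A by auto
    have "(U * transpose_mat V) $$ (a,b) = (\<Sum>k<d. U $$ (a,k) * V $$ (b,k))"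
      using UC VC a b by (auto simp: scalar_prod_def atLeast0LessThan)
    also have "\<dots> = (\<Sum>k<d. (\<lambda>i. Aw i a / real (c i) * w i b) (idx ! k))"
      using a b by (intro sum.cong refl) (auto simp: U_def V_def)
    also have "\<dots> = (\<Sum>i<n. real (c i) * (Aw i a / real (c i) * w i b))" by (rule sumidx)
    also have "\<dots> = (\<Sum>i<n. Aw i a * w i b)"
      using cnz by (intro sum.cong refl) simp
    also have "\<dots> = (\<Sum>i<n. \<Sum>l<n. A $$ (a,l) * (w i l * w i b))"
      unfolding Aw_def by (intro sum.cong refl) (simp add: sum_distrib_right sum_distrib_left mult_ac)
    also have "\<dots> = (\<Sum>l<n. \<Sum>i<n. A $$ (a,l) * (w i l * w i b))" by (rule sum.swap)
    also have "\<dots> = (\<Sum>l<n. A $$ (a,l) * (if l = b then 1 else 0))"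
      using F2 b by (intro sum.cong refl) (simp add: sum_distrib_left[symmetric])
    also have "\<dots> = A $$ (a,b)" using b by (simp add: if_distrib cong: if_cong)
    finally show "(U * transpose_mat V) $$ (a,b) = A $$ (a,b)" .
  qed (use UC VC A in auto)
  define reg where "reg = (\<Sum>k<d. (\<Sum>a<m. (U $$ (a,k))\<^sup>2) * (\<Sum>b<n. (V $$ (b,k))\<^sup>2))"
  have reg_eq: "reg = (\<Sum>i<n. lam i / real (c i))"
  proof -
    have "reg = (\<Sum>k<d. (\<lambda>i. (\<Sum>a<m. (Aw i a / real (c i))\<^sup>2) * (\<Sum>b<n. (w i b)\<^sup>2)) (idx ! k))"
      unfolding reg_def by (intro sum.cong refl) (auto simp: U_def V_def)
    also have "\<dots> = (\<Sum>i<n. real (c i) * ((\<Sum>a<m. (Aw i a / real (c i))\<^sup>2) * (\<Sum>b<n. (w i b)\<^sup>2)))"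
      by (rule sumidx)
    also have "\<dots> = (\<Sum>i<n. lam i / real (c i))"
    proof (intro sum.cong refl)
      fix i assume "i \<in> {..<n}"
      hence i: "i < n" by simp
      have w1: "(\<Sum>b<n. (w i b)\<^sup>2) = 1" using F1 i by (simp add: power2_eq_square)
      have l: "(\<Sum>a<m. (Aw i a)\<^sup>2) = lam i" using F3 i unfolding Aw_def by (simp add: power2_eq_square)
      have "(\<Sum>a<m. (Aw i a / real (c i))\<^sup>2) = (\<Sum>a<m. (Aw i a)\<^sup>2) / (real (c i))\<^sup>2"
        by (simp add: power_divide sum_divide_distrib)
      thus "real (c i) * ((\<Sum>a<m. (Aw i a / real (c i))\<^sup>2) * (\<Sum>b<n. (w i b)\<^sup>2)) = lam i / real (c i)"
        using w1 l cnz[of i] by (simp add: power2_eq_square)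
    qed
    finally show ?thesis .
  qed
  have reg_le: "reg \<le> S / real N"
  proof -
    have "lam i / real (c i) \<le> sg i / real N" if "i < n" for i
    proof -
      have lam: "lam i = (sg i)\<^sup>2" unfolding sg_def using lnn that by (simp add: max_def)
      have "real N * sg i \<le> real (c i)" unfolding c_def by linarith
      hence h0: "sg i * (real N * sg i) \<le> sg i * real (c i)" by (rule mult_left_mono[OF _ sgnn])
      have eq0: "(sg i)\<^sup>2 * real N = sg i * (real N * sg i)" by (rule sq_aux)
      have h1: "(sg i)\<^sup>2 * real N \<le> sg i * real (c i)" using h0 unfolding eq0 .
      have h: "(sg i)\<^sup>2 * real N / (real (c i) * real N) \<le> sg i * real (c i) / (real (c i) * real N)"
        by (rule divide_right_mono[OF h1]) simp
      have e1: "(sg i)\<^sup>2 * real N / (real (c i) * real N) = (sg i)\<^sup>2 / real (c i)" using N by simp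
      have e2: "sg i * real (c i) / (real (c i) * real N) = sg i / real N" using cnz[of i] by simp
      show ?thesis unfolding lam using h e1 e2 by simp
    qed
    hence "reg \<le> (\<Sum>i<n. sg i / real N)" unfolding reg_eq by (intro sum_mono) auto
    also have "\<dots> = S / real N" unfolding S by (simp add: sum_divide_distrib)
    finally show ?thesis .
  qed
  have regnn: "reg \<ge> 0" unfolding reg_def by (intro sum_nonneg mult_nonneg_nonneg) auto
  have d_le: "real d \<le> real N * S + 2 * real n"
  proof -
    have "real (c i) \<le> real N * sg i + 2" for i
    proof -
      have "real N * sg i \<ge> 0" using sgnn[of i] by simp
      hence "real (nat \<lceil>real N * sg i\<rceil>) \<le> real N * sg i + 1" by linarith
      thus ?thesis unfolding c_def by simp
    qed
    hence "real d \<le> (\<Sum>i<n. real N * sg i + 2)" unfolding dsum by (intro sum_mono) auto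
    also have "\<dots> = real N * S + 2 * real n" unfolding S by (simp add: sum.distrib sum_distrib_left)
    finally show ?thesis .
  qed
  have "real d * reg \<le> (real N * S + 2 * real n) * reg" using d_le regnn by (rule mult_right_mono)
  also have "\<dots> \<le> (real N * S + 2 * real n) * (S / real N)"
    using reg_le Snn by (intro mult_left_mono) auto
  also have "\<dots> = real N * S * (S / real N) + 2 * real n * (S / real N)" by (rule distrib_right)
  also have "real N * S * (S / real N) = S\<^sup>2" using N by (simp add: power2_eq_square field_simps)
  also have "2 * real n * (S / real N) = 2 * real n * S / real N" by simp
  finally have "real d * reg \<le> S\<^sup>2 + 2 * real n * S / real N" .
  thus ?thesis using dpos UC VC prod unfolding reg_def S_def by blast
qed


lemma limit_le_aux:
  fixes x y K :: real
  assumes K: "K \<ge> 0" and h: "\<And>N::nat. 0 < N \<Longrightarrow> x \<le> y + K / real N"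
  shows "x \<le> y"
proof (rule ccontr)
  assume "\<not> x \<le> y"
  hence del: "x - y > 0" by simp
  obtain N :: nat where N: "K / (x - y) < real N" using reals_Archimedean2 by blast
  have "0 \<le> K / (x - y)" using K del by simp
  hence "0 < real N" using N by linarith
  hence Npos: "0 < N" by simp
  have "K < real N * (x - y)" using N del by (simp add: divide_less_eq mult.commute)
  hence "K / real N < x - y" using Npos by (simp add: divide_less_eq mult.commute)
  thus False using h[OF Npos] by simp
qed

theorem theorem3:
  fixes p :: real and m n d_opt :: nat and X U_opt V_opt :: "real mat"
  assumes "0 < p" and "p < 1"
    and "X \<in> carrier_mat m n"
    and "0 < d_opt"
    and "U_opt \<in> carrier_mat m d_opt" and "V_opt \<in> carrier_mat n d_opt"
    and "\<forall>d U V. 0 < d \<longrightarrow> U \<in> carrier_mat m d \<longrightarrow> V \<in> carrier_mat n d \<longrightarrow>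
           dropout_obj p X d_opt U_opt V_opt \<le> dropout_obj p X d U V"
  shows "\<forall>A \<in> carrier_mat m n.
           frob_sq (X - U_opt * transpose_mat V_opt)
             + (1 - p) / p * (nuclear_norm (U_opt * transpose_mat V_opt))\<^sup>2
           \<le> frob_sq (X - A) + (1 - p) / p * (nuclear_norm A)\<^sup>2"
proof
  fix A :: "real mat" assume A: "A \<in> carrier_mat m n"
  note p = assms(1,2) and X = assms(3) and dpos = assms(4) and U = assms(5) and V = assms(6)
    and opt = assms(7)
  define c where "c = (1 - p) / p"
  have c: "c > 0" unfolding c_def using p by simp
  define F where "F = dropout_obj p X d_opt U_opt V_opt"
  have Fe: "F = frob_sq (X - U_opt * transpose_mat V_opt) + real d_opt * c * regU m n d_opt U_opt V_opt"
    unfolding F_def dropout_obj_eq[OF p dpos X U V] regU_def c_def by simp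
  have L: "(nuclear_norm (U_opt * transpose_mat V_opt))\<^sup>2 \<le> real d_opt * regU m n d_opt U_opt V_opt"
    by (rule nuclear_sq_le_reg[OF U V])
  have gopt: "frob_sq (X - U_opt * transpose_mat V_opt) + c * (nuclear_norm (U_opt * transpose_mat V_opt))\<^sup>2 \<le> F"
    unfolding Fe using mult_left_mono[OF L less_imp_le[OF c]] by (simp add: mult_ac)
  define S where "S = nuclear_norm A"
  have Snn: "S \<ge> 0" unfolding S_def by (rule nuclear_norm_nonneg[OF A])
  have bound: "frob_sq (X - U_opt * transpose_mat V_opt) + c * (nuclear_norm (U_opt * transpose_mat V_opt))\<^sup>2
      \<le> (frob_sq (X - A) + c * S\<^sup>2) + (c * (2 * real n * S)) / real N" if N: "0 < N" for N :: nat
  proof -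
    obtain d U' V' where d: "0 < d" and U': "U' \<in> carrier_mat m d" and V': "V' \<in> carrier_mat n d"
      and prod: "U' * transpose_mat V' = A"
      and bnd: "real d * (\<Sum>k<d. (\<Sum>a<m. (U' $$ (a,k))\<^sup>2) * (\<Sum>b<n. (V' $$ (b,k))\<^sup>2))
      \<le> (nuclear_norm A)\<^sup>2 + 2 * real n * nuclear_norm A / real N"
      using construct[OF A N] by blast
    have "F \<le> dropout_obj p X d U' V'" using opt d U' V' unfolding F_def by blast
    also have "\<dots> = frob_sq (X - A) + c * (real d * (\<Sum>k<d. (\<Sum>a<m. (U' $$ (a,k))\<^sup>2) * (\<Sum>b<n. (V' $$ (b,k))\<^sup>2)))"
      unfolding dropout_obj_eq[OF p d X U' V'] prod c_def by (simp add: mult_ac)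
    also have "\<dots> \<le> frob_sq (X - A) + c * (S\<^sup>2 + 2 * real n * S / real N)"
      using mult_left_mono[OF bnd less_imp_le[OF c]] unfolding S_def by simp
    also have "\<dots> = (frob_sq (X - A) + c * S\<^sup>2) + (c * (2 * real n * S)) / real N"
      by (simp add: algebra_simps)
    finally show ?thesis using gopt by simp
  qed
  have K: "0 \<le> c * (2 * real n * S)" using c Snn by simp
  have "frob_sq (X - U_opt * transpose_mat V_opt) + c * (nuclear_norm (U_opt * transpose_mat V_opt))\<^sup>2
      \<le> frob_sq (X - A) + c * S\<^sup>2"
    by (rule limit_le_aux[OF K bound])
  thus "frob_sq (X - U_opt * transpose_mat V_opt)
             + (1 - p) / p * (nuclear_norm (U_opt * transpose_mat V_opt))\<^sup>2
           \<le> frob_sq (X - A) + (1 - p) / p * (nuclear_norm A)\<^sup>2"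
    unfolding c_def S_def .
qed

end
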